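(* Let $\mathbf v\in\mathbb R^{n\times m}_{<0}$, $\mathbf b\in\mathbb R^n_{<0}$, $\mathbf u\in\mathbb R^n_{<0}$, and $\tau=\tau(\mathbf u,\mathbf b)=(b_i/u_i)_{i\in[n]}$. Then $\mathbf u$ is a competitive utility profile for $(\mathbf v,\mathbf b)$ if and only if there exists an allocation $\mathbf z$ with $\mathbf u(\mathbf z)=\mathbf u$ and $G_{\mathbf z}$ a subgraph of $G_\tau(\mathbf v)$. Moreover, the set of all such $\mathbf z$ coincides with the set of competitive allocations $\mathbf z$ for $(\mathbf v,\mathbf b)$ with $\mathbf u(\mathbf z)=\mathbf u$.
   Context: Setup: agents $[n]$, chores $[m]$, allocations $\mathbf z\in\mathbb R^{n\times m}_{\ge0}$ with column sums $1$, $u_i(\mathbf z_i)=\sum_jv_{i,j}z_{i,j}$. Competitive allocation for budgets $\mathbf b$: there exist prices $\mathbf p\in\mathbb R^m_{<0}$ such that each $\mathbf z_i$ maximizes $u_i$ over bundles $\mathbf x\in\mathbb R^m_{\ge0}$ with $\sum_jp_jx_j\le b_i$; a competitive utility profile is $\mathbf u(\mathbf z)$ for such $\mathbf z$. $G_{\mathbf z}$: edge $(i,j)$ iff $z_{i,j}>0$. For $\tau\in\mathbb R^n_{>0}$, $G_\tau(\mathbf v)$: edge $(i,j)$ iff $\tau_i|v_{i,j}|\le\tau_{i'}|v_{i',j}|$ for all $i'$. *)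

theory Defs
  imports Complex_Main
begin

text \<open>Agents are 0..<n, chores are 0..<m. Matrices are functions nat => nat => real,
  only their entries with i < n, j < m are relevant.\<close>

definition allocation :: "nat \<Rightarrow> nat \<Rightarrow> (nat \<Rightarrow> nat \<Rightarrow> real) \<Rightarrow> bool" where
  "allocation n m z \<longleftrightarrow>
     (\<forall>i<n. \<forall>j<m. z i j \<ge> 0) \<and> (\<forall>j<m. (\<Sum>i<n. z i j) = 1)"

definition util :: "nat \<Rightarrow> (nat \<Rightarrow> nat \<Rightarrow> real) \<Rightarrow> nat \<Rightarrow> (nat \<Rightarrow> real) \<Rightarrow> real" where
  "util m v i x = (\<Sum>j<m. v i j * x j)"

definition competitive_with_prices ::
  "nat \<Rightarrow> nat \<Rightarrow> (nat \<Rightarrow> nat \<Rightarrow> real) \<Rightarrow> (nat \<Rightarrow> real) \<Rightarrow> (nat \<Rightarrow> nat \<Rightarrow> real) \<Rightarrow> (nat \<Rightarrow> real) \<Rightarrow> bool" where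
  "competitive_with_prices n m v b z p \<longleftrightarrow>
     allocation n m z \<and> (\<forall>j<m. p j < 0) \<and>
     (\<forall>i<n. (\<Sum>j<m. p j * z i j) \<le> b i \<and>
        (\<forall>x. (\<forall>j<m. x j \<ge> 0) \<longrightarrow> (\<Sum>j<m. p j * x j) \<le> b i \<longrightarrow>
              util m v i x \<le> util m v i (z i)))"

definition competitive_allocation ::
  "nat \<Rightarrow> nat \<Rightarrow> (nat \<Rightarrow> nat \<Rightarrow> real) \<Rightarrow> (nat \<Rightarrow> real) \<Rightarrow> (nat \<Rightarrow> nat \<Rightarrow> real) \<Rightarrow> bool" where
  "competitive_allocation n m v b z \<longleftrightarrow> (\<exists>p. competitive_with_prices n m v b z p)"

definition competitive_utility_profile ::
  "nat \<Rightarrow> nat \<Rightarrow> (nat \<Rightarrow> nat \<Rightarrow> real) \<Rightarrow> (nat \<Rightarrow> real) \<Rightarrow> (nat \<Rightarrow> real) \<Rightarrow> bool" where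
  "competitive_utility_profile n m v b u \<longleftrightarrow>
     (\<exists>z. competitive_allocation n m v b z \<and> (\<forall>i<n. util m v i (z i) = u i))"

definition alloc_edge :: "(nat \<Rightarrow> nat \<Rightarrow> real) \<Rightarrow> nat \<Rightarrow> nat \<Rightarrow> bool" where
  "alloc_edge z i j \<longleftrightarrow> z i j > 0"

definition tau_edge :: "nat \<Rightarrow> (nat \<Rightarrow> real) \<Rightarrow> (nat \<Rightarrow> nat \<Rightarrow> real) \<Rightarrow> nat \<Rightarrow> nat \<Rightarrow> bool" where
  "tau_edge n \<tau> v i j \<longleftrightarrow> (\<forall>i'<n. \<tau> i * \<bar>v i j\<bar> \<le> \<tau> i' * \<bar>v i' j\<bar>)"

definition subgraph_of_tau :: "nat \<Rightarrow> nat \<Rightarrow> (nat \<Rightarrow> nat \<Rightarrow> real) \<Rightarrow> (nat \<Rightarrow> real) \<Rightarrow> (nat \<Rightarrow> nat \<Rightarrow> real) \<Rightarrow> bool" where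
  "subgraph_of_tau n m z \<tau> v \<longleftrightarrow> (\<forall>i<n. \<forall>j<m. alloc_edge z i j \<longrightarrow> tau_edge n \<tau> v i j)"

end

theory Submission
  imports Defs
begin

lemma fwd:
  assumes v: "\<forall>i<n. \<forall>j<m. v i j < 0" and b: "\<forall>i<n. b i < 0" and u: "\<forall>i<n. u i < 0"
   and c: "competitive_with_prices n m v b z p" and uz: "\<forall>i<n. util m v i (z i) = u i"
  shows "subgraph_of_tau n m z (\<lambda>i. b i / u i) v"
proof -
  from c have al: "allocation n m z" and pn: "\<forall>j<m. p j < 0" and bud: "\<forall>i<n. (\<Sum>j<m. p j * z i j) \<le> b i"
   and opt: "\<forall>i<n. \<forall>x. (\<forall>j<m. x j \<ge> 0) \<longrightarrow> (\<Sum>j<m. p j * x j) \<le> b i \<longrightarrow> util m v i x \<le> util m v i (z i)"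
    unfolding competitive_with_prices_def by auto
  have z0: "\<And>i j. i<n \<Longrightarrow> j<m \<Longrightarrow> z i j \<ge> 0" using al unfolding allocation_def by auto
  have one: "(b i / u i) * v i k \<le> p k" if i: "i<n" and k: "k<m" for i k
  proof -
    define x where "x = (\<lambda>j. if j = k then b i / p k else 0)"
    have pk: "p k < 0" using pn k by auto
    have bi: "b i < 0" using b i by auto
    have ui: "u i < 0" using u i by auto
    have vik: "v i k < 0" using v i k by auto
    have xn: "\<forall>j<m. x j \<ge> 0" using pk bi by (auto simp: x_def intro: divide_nonpos_neg less_imp_le)
    have "(\<Sum>j<m. p j * x j) = (\<Sum>j<m. if j = k then p k * (b i / p k) else 0)"
      by (rule sum.cong) (auto simp: x_def)
    also have "\<dots> = b i" using k pk by simp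
    finally have s1: "(\<Sum>j<m. p j * x j) \<le> b i" by simp
    have "util m v i x = (\<Sum>j<m. if j = k then v i k * (b i / p k) else 0)"
      unfolding util_def by (rule sum.cong) (auto simp: x_def)
    also have "\<dots> = v i k * (b i / p k)" using k by simp
    finally have "v i k * (b i / p k) \<le> u i" using opt i xn s1 uz by metis
    hence "u i * p k \<le> v i k * b i" using pk by (simp add: neg_divide_le_eq)
    thus ?thesis using ui by (simp add: neg_divide_le_eq mult.commute)
  qed
  show ?thesis unfolding subgraph_of_tau_def alloc_edge_def tau_edge_def
  proof (intro allI impI)
    fix i j i' assume i: "i<n" and j: "j<m" and zij: "0 < z i j" and i': "i'<n"
    define t where "t = b i / u i"
    have bi: "b i < 0" using b i by auto
    have ui: "u i < 0" using u i by auto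
    have t: "t > 0" using bi ui by (simp add: t_def divide_neg_neg)
    have nn: "\<forall>k\<in>{..<m}. 0 \<le> (p k / t - v i k) * z i k"
    proof
      fix k assume "k \<in> {..<m}"
      hence k: "k<m" by auto
      have "t * v i k \<le> p k" using one[OF i k] by (simp add: t_def)
      hence "v i k \<le> p k / t" using t by (simp add: pos_le_divide_eq mult.commute)
      thus "0 \<le> (p k / t - v i k) * z i k" using z0[OF i k] by simp
    qed
    have "(\<Sum>k<m. (p k / t - v i k) * z i k) = (\<Sum>k<m. p k * z i k) / t - u i"
      using uz i by (simp add: util_def sum_subtractf left_diff_distrib sum_divide_distrib)
    also have "\<dots> \<le> b i / t - u i" using bud i t by (simp add: divide_right_mono)
    also have "b i / t = u i" using bi ui by (simp add: t_def)
    finally have "(\<Sum>k<m. (p k / t - v i k) * z i k) \<le> 0" by simp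
    hence "(\<Sum>k<m. (p k / t - v i k) * z i k) = 0" using nn by (meson antisym sum_nonneg)
    hence "\<forall>k\<in>{..<m}. (p k / t - v i k) * z i k = 0"
      using sum_nonneg_eq_0_iff[of "{..<m}" "\<lambda>k. (p k / t - v i k) * z i k"] nn by auto
    hence "(p j / t - v i j) * z i j = 0" using j by auto
    hence "p j = t * v i j" using zij t by (auto simp: field_simps)
    moreover have "(b i' / u i') * v i' j \<le> p j" using one[OF i' j] .
    moreover have "b i' / u i' > 0" using b u i' by (simp add: divide_neg_neg)
    moreover have "v i j < 0" "v i' j < 0" using v i i' j by auto
    ultimately show "b i / u i * \<bar>v i j\<bar> \<le> b i' / u i' * \<bar>v i' j\<bar>"
      using t by (simp add: t_def)
  qed
qed

lemma bwd:
  assumes v: "\<forall>i<n. \<forall>j<m. v i j < 0" and b: "\<forall>i<n. b i < 0" and u: "\<forall>i<n. u i < 0"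
   and al: "allocation n m z" and uz: "\<forall>i<n. util m v i (z i) = u i"
   and sg: "subgraph_of_tau n m z (\<lambda>i. b i / u i) v"
  shows "competitive_with_prices n m v b z (\<lambda>j. Max ((\<lambda>i. b i / u i * v i j) ` {..<n}))"
proof -
  define P where "P = (\<lambda>j. Max ((\<lambda>i. b i / u i * v i j) ` {..<n}))"
  define t where "t = (\<lambda>i. b i / u i)"
  have tp: "t i > 0" if "i<n" for i using b u that by (simp add: t_def divide_neg_neg)
  have z0: "\<And>i j. i<n \<Longrightarrow> j<m \<Longrightarrow> z i j \<ge> 0" using al unfolding allocation_def by auto
  have npos: "n > 0" if "j<m" for j
  proof (rule ccontr)
    assume "\<not> n > 0" hence "n = 0" by simp
    thus False using al that unfolding allocation_def by auto
  qed
  have Pge: "t i * v i j \<le> P j" if "i<n" "j<m" for i j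
    unfolding P_def t_def using that by (intro Max_ge) auto
  have Pneg: "P j < 0" if j: "j<m" for j
  proof -
    have "P j \<in> (\<lambda>i. b i / u i * v i j) ` {..<n}" unfolding P_def
      using npos[OF j] by (intro Max_in) auto
    then obtain i where i: "i<n" and "P j = t i * v i j" by (auto simp: t_def)
    thus ?thesis using tp[OF i] v i j by (simp add: mult_pos_neg)
  qed
  have Ple: "P j \<le> t i * v i j" if i: "i<n" and j: "j<m" and zij: "z i j > 0" for i j
  proof -
    have te: "\<forall>i'<n. t i * \<bar>v i j\<bar> \<le> t i' * \<bar>v i' j\<bar>"
      using sg i j zij unfolding subgraph_of_tau_def alloc_edge_def tau_edge_def t_def by auto
    show ?thesis unfolding P_def
    proof (rule Max.boundedI)
      show "finite ((\<lambda>i. b i / u i * v i j) ` {..<n})" by simp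
      show "(\<lambda>i. b i / u i * v i j) ` {..<n} \<noteq> {}" using npos[OF j] by auto
      fix a assume "a \<in> (\<lambda>i. b i / u i * v i j) ` {..<n}"
      then obtain i' where i': "i'<n" and a: "a = t i' * v i' j" by (auto simp: t_def)
      have "t i * \<bar>v i j\<bar> \<le> t i' * \<bar>v i' j\<bar>" using te i' by auto
      moreover have "v i j < 0" "v i' j < 0" using v i i' j by auto
      ultimately show "a \<le> t i * v i j" using a by simp
    qed
  qed
  have Pz: "P j * z i j = t i * (v i j * z i j)" if i: "i<n" and j: "j<m" for i j
  proof (cases "z i j > 0")
    case True thus ?thesis using Ple[OF i j True] Pge[OF i j] by simp
  next
    case False hence "z i j = 0" using z0[OF i j] by simp
    thus ?thesis by simp
  qed
  have budget: "(\<Sum>j<m. P j * z i j) = b i" if i: "i<n" for i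
  proof -
    have "(\<Sum>j<m. P j * z i j) = (\<Sum>j<m. t i * (v i j * z i j))" using Pz i by (intro sum.cong) auto
    also have "\<dots> = t i * u i" using uz i by (simp add: util_def sum_distrib_left[symmetric])
    also have "\<dots> = b i" using u i by (auto simp: t_def)
    finally show ?thesis .
  qed
  have opt: "util m v i x \<le> util m v i (z i)"
    if i: "i<n" and xn: "\<forall>j<m. x j \<ge> 0" and xb: "(\<Sum>j<m. P j * x j) \<le> b i" for i x
  proof -
    have "util m v i x \<le> (\<Sum>j<m. (P j / t i) * x j)" unfolding util_def
    proof (rule sum_mono)
      fix j assume "j \<in> {..<m}" hence j: "j<m" by simp
      have "v i j \<le> P j / t i" using Pge[OF i j] tp[OF i] by (simp add: pos_le_divide_eq mult.commute)
      thus "v i j * x j \<le> P j / t i * x j" using xn j mult_right_mono by (metis times_divide_eq_left)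
    qed
    also have "\<dots> = (\<Sum>j<m. P j * x j) / t i" by (simp add: sum_divide_distrib)
    also have "\<dots> \<le> b i / t i" using xb tp[OF i] by (simp add: divide_right_mono)
    also have "b i / t i = u i" using b u i by (auto simp: t_def)
    finally show ?thesis using uz i by simp
  qed
  show ?thesis unfolding competitive_with_prices_def P_def[symmetric]
    using al Pneg budget opt by auto
qed

theorem corollary5:
  fixes n m :: nat and v :: "nat \<Rightarrow> nat \<Rightarrow> real" and b u :: "nat \<Rightarrow> real"
  assumes "\<forall>i<n. \<forall>j<m. v i j < 0"
    and "\<forall>i<n. b i < 0"
    and "\<forall>i<n. u i < 0"
  defines "\<tau> \<equiv> (\<lambda>i. b i / u i)"
  shows "(competitive_utility_profile n m v b u \<longleftrightarrow>
           (\<exists>z. allocation n m z \<and> (\<forall>i<n. util m v i (z i) = u i) \<and> subgraph_of_tau n m z \<tau> v))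
       \<and> (\<forall>z. (allocation n m z \<and> (\<forall>i<n. util m v i (z i) = u i) \<and> subgraph_of_tau n m z \<tau> v)
               \<longleftrightarrow> (competitive_allocation n m v b z \<and> (\<forall>i<n. util m v i (z i) = u i)))"
proof -
  have key: "(allocation n m z \<and> (\<forall>i<n. util m v i (z i) = u i) \<and> subgraph_of_tau n m z \<tau> v)
               \<longleftrightarrow> (competitive_allocation n m v b z \<and> (\<forall>i<n. util m v i (z i) = u i))" for z
  proof
    assume h: "allocation n m z \<and> (\<forall>i<n. util m v i (z i) = u i) \<and> subgraph_of_tau n m z \<tau> v"
    show "competitive_allocation n m v b z \<and> (\<forall>i<n. util m v i (z i) = u i)"
      using bwd[OF assms(1-3)] h unfolding competitive_allocation_def \<tau>_def by blast
  next
    assume h: "competitive_allocation n m v b z \<and> (\<forall>i<n. util m v i (z i) = u i)"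
    then obtain p where c: "competitive_with_prices n m v b z p" unfolding competitive_allocation_def by blast
    hence "allocation n m z" unfolding competitive_with_prices_def by simp
    thus "allocation n m z \<and> (\<forall>i<n. util m v i (z i) = u i) \<and> subgraph_of_tau n m z \<tau> v"
      using fwd[OF assms(1-3) c] h unfolding \<tau>_def by blast
  qed
  show ?thesis using key unfolding competitive_utility_profile_def by blast
qed

end
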